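(* In the standing setting, let $(\psi,\alpha),(\phi,\beta)\in\mathcal{A}\times\mathcal{B}$ with liftings $\psi^\uparrow,\phi^\uparrow$, and write $d(g)=\psi^\uparrow(g)\phi^\uparrow(g)^{-1}$ and $e(h)=\phi^\uparrow(h)\psi^\uparrow(h)^{-1}$. Then $(G,r)$ and $(G,r')$ are set-theoretic non-degenerate solutions of the Yang--Baxter equation, where for $g,h\in G$ $$r(g,h)=\Big(d(g)\,h\,d(g)^{-1}\,\beta(g^{-1},h)\,\alpha(g,h),\ \ \psi^\uparrow(h)^{-1}\,d(g)\,h^{-1}\,d(g)^{-1}\,g\,\psi^\uparrow(g)\,h\,\psi^\uparrow(g)^{-1}\,\psi^\uparrow(h)\,\beta(g,h)\,\alpha(h^{-1},g)\Big),$$ $$r'(g,h)=\Big(g\,\psi^\uparrow(g)\,h\,\psi^\uparrow(g)^{-1}\,\phi^\uparrow(h)\,g^{-1}\,\phi^\uparrow(h)^{-1}\,\beta(h,g^{-1})\,\alpha(g,h),\ \ e(h)\,g\,e(h)^{-1}\,\beta(h,g)\,\alpha(h^{-1},g)\Big).$$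
   Context: Standing setting: $(G,\cdot)$ is a group, $K$ is a subgroup of $G$ contained in the centre $Z(G)$, and $A$ is a subgroup with $K\le A\le G$ and $A/K$ abelian. Let $\mathcal{A}=\{\psi\in\operatorname{End}(G/K):\psi(G/K)\le A/K\}$. A lifting of $\psi\in\mathcal{A}$ is any set map $\psi^{\uparrow}:G\to A$ with $\psi^{\uparrow}(g)K=\psi(gK)$ for all $g\in G$. Let $\mathcal{B}$ be the set of maps $\alpha:G\times G\to K$ that are bilinear, i.e. $\alpha(gh,k)=\alpha(g,k)\alpha(h,k)$ and $\alpha(g,hk)=\alpha(g,h)\alpha(g,k)$, and satisfy $\alpha(k,g)=\alpha(g,k)=1$ for all $k\in K$, $g\in G$. A set-theoretic solution of the Yang--Baxter equation is a pair $(X,r)$ with $X\neq\emptyset$ and $r:X\times X\to X\times X$, $r(x,y)=(\sigma_x(y),\tau_y(x))$, a bijection satisfying $(r\times\mathrm{id}_X)(\mathrm{id}_X\times r)(r\times\mathrm{id}_X)=(\mathrm{id}_X\times r)(r\times\mathrm{id}_X)(\mathrm{id}_X\times r)$; it is non-degenerate if all $\sigma_x$ and $\tau_x$ are bijective. *)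

theory Defs
  imports "HOL-Algebra.Algebra"
begin

definition r12 :: "('a \<times> 'a \<Rightarrow> 'a \<times> 'a) \<Rightarrow> 'a \<times> 'a \<times> 'a \<Rightarrow> 'a \<times> 'a \<times> 'a" where
  "r12 r = (\<lambda>(x, y, z). (fst (r (x, y)), snd (r (x, y)), z))"

definition r23 :: "('a \<times> 'a \<Rightarrow> 'a \<times> 'a) \<Rightarrow> 'a \<times> 'a \<times> 'a \<Rightarrow> 'a \<times> 'a \<times> 'a" where
  "r23 r = (\<lambda>(x, y, z). (x, fst (r (y, z)), snd (r (y, z))))"

definition ybe_solution :: "'a set \<Rightarrow> ('a \<times> 'a \<Rightarrow> 'a \<times> 'a) \<Rightarrow> bool" where
  "ybe_solution S r \<longleftrightarrow> S \<noteq> {} \<and> bij_betw r (S \<times> S) (S \<times> S) \<and>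
     (\<forall>t \<in> S \<times> S \<times> S. r12 r (r23 r (r12 r t)) = r23 r (r12 r (r23 r t)))"

definition nondegenerate :: "'a set \<Rightarrow> ('a \<times> 'a \<Rightarrow> 'a \<times> 'a) \<Rightarrow> bool" where
  "nondegenerate S r \<longleftrightarrow>
     (\<forall>x \<in> S. bij_betw (\<lambda>y. fst (r (x, y))) S S) \<and>
     (\<forall>y \<in> S. bij_betw (\<lambda>x. snd (r (x, y))) S S)"

definition central_subgroup :: "('a, 'b) monoid_scheme \<Rightarrow> 'a set \<Rightarrow> bool" where
  "central_subgroup G K \<longleftrightarrow> subgroup K G \<and>
     (\<forall>k \<in> K. \<forall>g \<in> carrier G. k \<otimes>\<^bsub>G\<^esub> g = g \<otimes>\<^bsub>G\<^esub> k)"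

definition quot_sub :: "('a, 'b) monoid_scheme \<Rightarrow> 'a set \<Rightarrow> 'a set \<Rightarrow> 'a set set" where
  "quot_sub G K A = (\<lambda>a. K #>\<^bsub>G\<^esub> a) ` A"

definition endA :: "('a, 'b) monoid_scheme \<Rightarrow> 'a set \<Rightarrow> 'a set \<Rightarrow> ('a set \<Rightarrow> 'a set) set" where
  "endA G K A = {\<psi>. \<psi> \<in> hom (G Mod K) (G Mod K) \<and> \<psi> ` carrier (G Mod K) \<subseteq> quot_sub G K A}"

definition lifting :: "('a, 'b) monoid_scheme \<Rightarrow> 'a set \<Rightarrow> 'a set \<Rightarrow> ('a set \<Rightarrow> 'a set) \<Rightarrow> ('a \<Rightarrow> 'a) \<Rightarrow> bool" where
  "lifting G K A \<psi> \<psi>u \<longleftrightarrow> (\<forall>g \<in> carrier G. \<psi>u g \<in> A \<and> K #>\<^bsub>G\<^esub> (\<psi>u g) = \<psi> (K #>\<^bsub>G\<^esub> g))"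

definition bilinB :: "('a, 'b) monoid_scheme \<Rightarrow> 'a set \<Rightarrow> ('a \<Rightarrow> 'a \<Rightarrow> 'a) set" where
  "bilinB G K = {\<alpha>.
     (\<forall>g \<in> carrier G. \<forall>h \<in> carrier G. \<alpha> g h \<in> K) \<and>
     (\<forall>g \<in> carrier G. \<forall>h \<in> carrier G. \<forall>k \<in> carrier G.
        \<alpha> (g \<otimes>\<^bsub>G\<^esub> h) k = \<alpha> g k \<otimes>\<^bsub>G\<^esub> \<alpha> h k \<and>
        \<alpha> g (h \<otimes>\<^bsub>G\<^esub> k) = \<alpha> g h \<otimes>\<^bsub>G\<^esub> \<alpha> g k) \<and>
     (\<forall>k \<in> K. \<forall>g \<in> carrier G. \<alpha> k g = \<one>\<^bsub>G\<^esub> \<and> \<alpha> g k = \<one>\<^bsub>G\<^esub>)}"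

definition ybe_r :: "('a, 'b) monoid_scheme \<Rightarrow> ('a \<Rightarrow> 'a) \<Rightarrow> ('a \<Rightarrow> 'a) \<Rightarrow>
    ('a \<Rightarrow> 'a \<Rightarrow> 'a) \<Rightarrow> ('a \<Rightarrow> 'a \<Rightarrow> 'a) \<Rightarrow> 'a \<times> 'a \<Rightarrow> 'a \<times> 'a" where
  "ybe_r G \<psi>u \<phi>u \<alpha> \<beta> = (\<lambda>(g, h).
     (let d = (\<lambda>x. \<psi>u x \<otimes>\<^bsub>G\<^esub> inv\<^bsub>G\<^esub> (\<phi>u x)) in
      (d g \<otimes>\<^bsub>G\<^esub> h \<otimes>\<^bsub>G\<^esub> inv\<^bsub>G\<^esub> (d g) \<otimes>\<^bsub>G\<^esub> \<beta> (inv\<^bsub>G\<^esub> g) h \<otimes>\<^bsub>G\<^esub> \<alpha> g h,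
       inv\<^bsub>G\<^esub> (\<psi>u h) \<otimes>\<^bsub>G\<^esub> d g \<otimes>\<^bsub>G\<^esub> inv\<^bsub>G\<^esub> h \<otimes>\<^bsub>G\<^esub> inv\<^bsub>G\<^esub> (d g) \<otimes>\<^bsub>G\<^esub> g
         \<otimes>\<^bsub>G\<^esub> \<psi>u g \<otimes>\<^bsub>G\<^esub> h \<otimes>\<^bsub>G\<^esub> inv\<^bsub>G\<^esub> (\<psi>u g) \<otimes>\<^bsub>G\<^esub> \<psi>u h
         \<otimes>\<^bsub>G\<^esub> \<beta> g h \<otimes>\<^bsub>G\<^esub> \<alpha> (inv\<^bsub>G\<^esub> h) g)))"

definition ybe_r' :: "('a, 'b) monoid_scheme \<Rightarrow> ('a \<Rightarrow> 'a) \<Rightarrow> ('a \<Rightarrow> 'a) \<Rightarrow>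
    ('a \<Rightarrow> 'a \<Rightarrow> 'a) \<Rightarrow> ('a \<Rightarrow> 'a \<Rightarrow> 'a) \<Rightarrow> 'a \<times> 'a \<Rightarrow> 'a \<times> 'a" where
  "ybe_r' G \<psi>u \<phi>u \<alpha> \<beta> = (\<lambda>(g, h).
     (let e = (\<lambda>x. \<phi>u x \<otimes>\<^bsub>G\<^esub> inv\<^bsub>G\<^esub> (\<psi>u x)) in
      (g \<otimes>\<^bsub>G\<^esub> \<psi>u g \<otimes>\<^bsub>G\<^esub> h \<otimes>\<^bsub>G\<^esub> inv\<^bsub>G\<^esub> (\<psi>u g) \<otimes>\<^bsub>G\<^esub> \<phi>u h \<otimes>\<^bsub>G\<^esub> inv\<^bsub>G\<^esub> g
         \<otimes>\<^bsub>G\<^esub> inv\<^bsub>G\<^esub> (\<phi>u h) \<otimes>\<^bsub>G\<^esub> \<beta> h (inv\<^bsub>G\<^esub> g) \<otimes>\<^bsub>G\<^esub> \<alpha> g h,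
       e h \<otimes>\<^bsub>G\<^esub> g \<otimes>\<^bsub>G\<^esub> inv\<^bsub>G\<^esub> (e h) \<otimes>\<^bsub>G\<^esub> \<beta> h g \<otimes>\<^bsub>G\<^esub> \<alpha> (inv\<^bsub>G\<^esub> h) g)))"

end

theory Submission
  imports Defs
begin

locale lbrace =
  fixes S :: "'a set" and add :: "'a \<Rightarrow> 'a \<Rightarrow> 'a" and e :: 'a and neg :: "'a \<Rightarrow> 'a"
    and lam ilam :: "'a \<Rightarrow> 'a \<Rightarrow> 'a"
  assumes add_closed[simp]: "a\<in>S \<Longrightarrow> b\<in>S \<Longrightarrow> add a b \<in> S"
  and e_in[simp]: "e \<in> S" and neg_closed[simp]: "a \<in> S \<Longrightarrow> neg a \<in> S"
  and add_assoc[simp]: "a\<in>S \<Longrightarrow> b\<in>S \<Longrightarrow> c\<in>S \<Longrightarrow> add (add a b) c = add a (add b c)"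
  and add_e_left[simp]: "a\<in>S \<Longrightarrow> add e a = a"
  and add_e_right[simp]: "a\<in>S \<Longrightarrow> add a e = a"
  and neg_left[simp]: "a\<in>S \<Longrightarrow> add (neg a) a = e"
  and neg_right[simp]: "a\<in>S \<Longrightarrow> add a (neg a) = e"
  and lam_closed[simp]: "a\<in>S \<Longrightarrow> b\<in>S \<Longrightarrow> lam a b \<in> S"
  and lam_add: "a\<in>S \<Longrightarrow> x\<in>S \<Longrightarrow> y\<in>S \<Longrightarrow> lam a (add x y) = add (lam a x) (lam a y)"
  and ilam_closed[simp]: "a\<in>S \<Longrightarrow> b\<in>S \<Longrightarrow> ilam a b \<in> S"
  and lam_ilam[simp]: "a\<in>S \<Longrightarrow> x\<in>S \<Longrightarrow> lam a (ilam a x) = x"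
  and ilam_lam[simp]: "a\<in>S \<Longrightarrow> x\<in>S \<Longrightarrow> ilam a (lam a x) = x"
  and lam_mul0: "a\<in>S \<Longrightarrow> b\<in>S \<Longrightarrow> c\<in>S \<Longrightarrow> lam (add a (lam a b)) c = lam a (lam b c)"
  and lam_e[simp]: "x\<in>S \<Longrightarrow> lam e x = x"
begin

lemma add_cancel1[simp]: "a\<in>S \<Longrightarrow> b\<in>S \<Longrightarrow> add a (add (neg a) b) = b"
  by (subst add_assoc[symmetric]) simp_all
lemma add_cancel2[simp]: "a\<in>S \<Longrightarrow> b\<in>S \<Longrightarrow> add (neg a) (add a b) = b"
  by (subst add_assoc[symmetric]) simp_all

lemma add_left_cancel: "a\<in>S \<Longrightarrow> b\<in>S \<Longrightarrow> c\<in>S \<Longrightarrow> add a b = add a c \<Longrightarrow> b = c"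
proof -
  assume h: "a\<in>S" "b\<in>S" "c\<in>S" "add a b = add a c"
  have "b = add (neg a) (add a b)" using h(1,2) by simp
  also have "\<dots> = add (neg a) (add a c)" using h(4) by simp
  also have "\<dots> = c" using h(1,3) by simp
  finally show ?thesis .
qed

lemma neg_unique: "a\<in>S \<Longrightarrow> b\<in>S \<Longrightarrow> add a b = e \<Longrightarrow> neg a = b"
proof -
  assume h: "a\<in>S" "b\<in>S" "add a b = e"
  have "neg a = add (neg a) (add a b)" using h by simp
  also have "\<dots> = b" using h(1,2) by simp
  finally show ?thesis .
qed

lemma neg_neg[simp]: "a\<in>S \<Longrightarrow> neg (neg a) = a"
  using neg_unique[of "neg a" a] by simp

lemma neg_add: "a\<in>S \<Longrightarrow> b\<in>S \<Longrightarrow> neg (add a b) = add (neg b) (neg a)"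
  by (rule neg_unique) auto

lemma neg_e[simp]: "neg e = e" using neg_unique[of e e] by simp

lemma lam_e2[simp]: "a\<in>S \<Longrightarrow> lam a e = e"
proof -
  assume a: "a\<in>S"
  have "lam a e = add (lam a e) (lam a e)" using a lam_add[of a e e] by simp
  then have "add (lam a e) e = add (lam a e) (lam a e)" using a by simp
  then show ?thesis using a add_left_cancel[of "lam a e" e "lam a e"] by simp
qed

lemma lam_neg: "a\<in>S \<Longrightarrow> x\<in>S \<Longrightarrow> lam a (neg x) = neg (lam a x)"
proof -
  assume a: "a\<in>S" "x\<in>S"
  have "add (lam a x) (lam a (neg x)) = e" using a lam_add[of a x "neg x", symmetric] by simp
  then show ?thesis using a neg_unique[of "lam a x" "lam a (neg x)"] by simp
qed

lemma lam_inj: "a\<in>S \<Longrightarrow> x\<in>S \<Longrightarrow> y\<in>S \<Longrightarrow> lam a x = lam a y \<Longrightarrow> x = y"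
proof -
  assume h: "a\<in>S" "x\<in>S" "y\<in>S" "lam a x = lam a y"
  have "x = ilam a (lam a x)" using h(1,2) by simp
  also have "\<dots> = ilam a (lam a y)" using h(4) by simp
  also have "\<dots> = y" using h(1,3) by simp
  finally show ?thesis .
qed

lemma ilam_add: "a\<in>S \<Longrightarrow> x\<in>S \<Longrightarrow> y\<in>S \<Longrightarrow> ilam a (add x y) = add (ilam a x) (ilam a y)"
  by (rule lam_inj[of a]) (auto simp: lam_add)

lemma ilam_neg: "a\<in>S \<Longrightarrow> x\<in>S \<Longrightarrow> ilam a (neg x) = neg (ilam a x)"
  by (rule lam_inj[of a]) (auto simp: lam_neg)

lemma ilam_e[simp]: "a\<in>S \<Longrightarrow> ilam a e = e"
  using ilam_lam[of a e] by simp

definition mul where "mul a b = add a (lam a b)"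
definition bar where "bar a = ilam a (neg a)"

lemma mul_closed[simp]: "a\<in>S \<Longrightarrow> b\<in>S \<Longrightarrow> mul a b \<in> S" by (simp add: mul_def)
lemma bar_closed[simp]: "a\<in>S \<Longrightarrow> bar a \<in> S" by (simp add: bar_def)

lemma lam_mul: "a\<in>S \<Longrightarrow> b\<in>S \<Longrightarrow> c\<in>S \<Longrightarrow> lam (mul a b) c = lam a (lam b c)"
  by (simp add: mul_def lam_mul0)

lemma mul_assoc[simp]: "a\<in>S \<Longrightarrow> b\<in>S \<Longrightarrow> c\<in>S \<Longrightarrow> mul (mul a b) c = mul a (mul b c)"
  by (simp add: mul_def lam_mul0 lam_add)

lemma mul_e_left[simp]: "a\<in>S \<Longrightarrow> mul e a = a" by (simp add: mul_def)
lemma mul_e_right[simp]: "a\<in>S \<Longrightarrow> mul a e = a" by (simp add: mul_def)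
lemma bar_right[simp]: "a\<in>S \<Longrightarrow> mul a (bar a) = e" by (simp add: mul_def bar_def)

lemma lam_bar: "a\<in>S \<Longrightarrow> x\<in>S \<Longrightarrow> lam (bar a) x = ilam a x"
proof -
  assume a: "a\<in>S" "x\<in>S"
  have "lam a (lam (bar a) x) = x" using a lam_mul[of a "bar a" x, symmetric] by simp
  then have "ilam a (lam a (lam (bar a) x)) = ilam a x" by simp
  then show ?thesis using a by simp
qed

lemma bar_left[simp]: "a\<in>S \<Longrightarrow> mul (bar a) a = e"
proof -
  assume a: "a\<in>S"
  have "mul (bar a) a = add (ilam a (neg a)) (ilam a a)" using a lam_bar[of a a] by (simp add: mul_def bar_def)
  also have "\<dots> = ilam a (add (neg a) a)" by (rule ilam_add[symmetric]) (simp_all add: a)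
  also have "\<dots> = e" using a by simp
  finally show ?thesis .
qed

lemma mul_cancel1[simp]: "a\<in>S \<Longrightarrow> b\<in>S \<Longrightarrow> mul a (mul (bar a) b) = b"
  by (subst mul_assoc[symmetric]) simp_all
lemma mul_cancel2[simp]: "a\<in>S \<Longrightarrow> b\<in>S \<Longrightarrow> mul (bar a) (mul a b) = b"
  by (subst mul_assoc[symmetric]) simp_all
lemma mul_left_cancel: "a\<in>S \<Longrightarrow> b\<in>S \<Longrightarrow> c\<in>S \<Longrightarrow> mul a b = mul a c \<Longrightarrow> b = c"
proof -
  assume h: "a\<in>S" "b\<in>S" "c\<in>S" "mul a b = mul a c"
  have "b = mul (bar a) (mul a b)" using h(1,2) by simp
  also have "\<dots> = mul (bar a) (mul a c)" using h(4) by simp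
  also have "\<dots> = c" using h(1,3) by simp
  finally show ?thesis .
qed
lemma bar_unique: "a\<in>S \<Longrightarrow> b\<in>S \<Longrightarrow> mul a b = e \<Longrightarrow> bar a = b"
proof -
  assume h: "a\<in>S" "b\<in>S" "mul a b = e"
  have "bar a = mul (bar a) (mul a b)" using h by simp
  also have "\<dots> = b" using h(1,2) by simp
  finally show ?thesis .
qed
lemma bar_bar[simp]: "a\<in>S \<Longrightarrow> bar (bar a) = a"
  using bar_unique[of "bar a" a] by simp
lemma bar_mul: "a\<in>S \<Longrightarrow> b\<in>S \<Longrightarrow> bar (mul a b) = mul (bar b) (bar a)"
  by (rule bar_unique) auto

lemma lam_eq: "a\<in>S \<Longrightarrow> b\<in>S \<Longrightarrow> lam a b = add (neg a) (mul a b)"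
  by (simp add: mul_def)


lemma tau_char: "a\<in>S \<Longrightarrow> b\<in>S \<Longrightarrow> t\<in>S \<Longrightarrow> mul (lam a b) t = mul a b \<Longrightarrow>
   t = ilam (lam a b) (add (neg (lam a b)) (add a (lam a b)))"
proof -
  assume a: "a\<in>S" "b\<in>S" "t\<in>S" and m: "mul (lam a b) t = mul a b"
  define u where "u = lam a b"
  have u: "u \<in> S" using a by (simp add: u_def)
  have "t = mul (bar u) (mul u t)" using a u by simp
  also have "mul u t = mul a b" using m by (simp add: u_def)
  also have "mul (bar u) (mul a b) = add (bar u) (ilam u (mul a b))" using a u by (simp add: mul_def lam_bar)
  also have "bar u = ilam u (neg u)" by (simp add: bar_def)
  finally show ?thesis using a u by (simp add: ilam_add mul_def u_def)
qed

theorem solution: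
  fixes f :: "'a \<times> 'a \<Rightarrow> 'a \<times> 'a"
  assumes f1: "\<And>a b. a\<in>S \<Longrightarrow> b\<in>S \<Longrightarrow> fst (f (a,b)) = lam a b"
    and f2: "\<And>a b. a\<in>S \<Longrightarrow> b\<in>S \<Longrightarrow> snd (f (a,b)) \<in> S"
    and f3: "\<And>a b. a\<in>S \<Longrightarrow> b\<in>S \<Longrightarrow> mul (fst (f (a,b))) (snd (f (a,b))) = mul a b"
  shows "ybe_solution S f \<and> nondegenerate S f"
proof -
  define T where "T a b = snd (f (a,b))" for a b
  have fab: "a\<in>S \<Longrightarrow> b\<in>S \<Longrightarrow> f (a,b) = (lam a b, T a b)" for a b
    using f1 by (simp add: T_def prod_eq_iff)
  have Tc[simp]: "a\<in>S \<Longrightarrow> b\<in>S \<Longrightarrow> T a b \<in> S" for a b using f2 T_def by simp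
  have Tm: "a\<in>S \<Longrightarrow> b\<in>S \<Longrightarrow> mul (lam a b) (T a b) = mul a b" for a b using f1 f3 T_def by simp
  have Tf: "a\<in>S \<Longrightarrow> b\<in>S \<Longrightarrow> T a b = ilam (lam a b) (add (neg (lam a b)) (add a (lam a b)))" for a b
    using tau_char Tm Tc by blast
  have Tb: "T a b = mul (bar (lam a b)) (mul a b)" if ab: "a\<in>S" "b\<in>S" for a b
  proof -
    have "T a b = mul (bar (lam a b)) (mul (lam a b) (T a b))" using ab by simp
    then show ?thesis using Tm ab by simp
  qed
  have lamT: "a\<in>S \<Longrightarrow> b\<in>S \<Longrightarrow> c\<in>S \<Longrightarrow> lam (T a b) c = ilam (lam a b) (lam a (lam b c))" for a b c
    using Tb by (simp add: lam_mul lam_bar)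
  have braid: "f (fst (f (x,y)), fst (f (snd (f (x,y)), z))) = 
      (fst (f (x, fst (f (y,z)))), fst (f (snd (f (x, fst (f (y,z)))), snd (f (y,z)))))
    \<and> snd (f (snd (f (x,y)), z)) = snd (f (snd (f (x, fst (f (y,z)))), snd (f (y,z))))"
    if xyz: "x\<in>S" "y\<in>S" "z\<in>S" for x y z
  proof -
    define u where "u = lam x y"
    define z' where "z' = lam (T x y) z"
    define v where "v = lam y z"
    define w where "w = lam x v"
    have S: "u\<in>S" "z'\<in>S" "v\<in>S" "w\<in>S" using xyz by (auto simp: u_def z'_def v_def w_def)
    have e1: "lam u z' = w" using xyz S by (simp add: u_def z'_def w_def v_def lamT)
    have L1: "fst (f (u, z')) = w" using S e1 f1 by simp
    have R1: "fst (f (x, v)) = w" using S xyz f1 by (simp add: w_def)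
    have L2: "T u z' = ilam w (add (neg w) (add u w))" using Tf S e1 by simp
    have R2: "lam (T x v) (T y z) = ilam w (add (neg w) (add u w))"
    proof -
      have "lam (T x v) (T y z) = ilam w (lam x (lam v (T y z)))" using lamT xyz S by (simp add: w_def)
      also have "lam v (T y z) = add (neg v) (add y v)" using Tf xyz S by (simp add: v_def)
      also have "lam x (add (neg v) (add y v)) = add (neg w) (add u w)"
        using xyz S by (simp add: lam_add lam_neg u_def w_def)
      finally show ?thesis .
    qed
    have P1: "mul w (mul (T u z') (T (T x y) z)) = mul x (mul y z)"
    proof -
      have "mul w (mul (T u z') (T (T x y) z)) = mul (mul (lam u z') (T u z')) (T (T x y) z)"
        using e1 S xyz by simp
      also have "\<dots> = mul u (mul z' (T (T x y) z))" using Tm S xyz by simp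
      also have "mul z' (T (T x y) z) = mul (T x y) z" using Tm xyz by (simp add: z'_def)
      also have "mul u (mul (T x y) z) = mul (mul u (T x y)) z" using xyz S by simp
      also have "mul u (T x y) = mul x y" using Tm[of x y] xyz by (simp add: u_def)
      also have "mul (mul x y) z = mul x (mul y z)" using xyz by simp
      finally show ?thesis .
    qed
    have P2: "mul w (mul (lam (T x v) (T y z)) (T (T x v) (T y z))) = mul x (mul y z)"
    proof -
      have "mul (lam (T x v) (T y z)) (T (T x v) (T y z)) = mul (T x v) (T y z)" using Tm xyz S by simp
      then have "mul w (mul (lam (T x v) (T y z)) (T (T x v) (T y z))) = mul (mul w (T x v)) (T y z)"
        using xyz S by simp
      also have "mul w (T x v) = mul x v" using Tm xyz S by (simp add: w_def)
      also have "mul (mul x v) (T y z) = mul x (mul v (T y z))" using xyz S by simp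
      also have "mul v (T y z) = mul y z" using Tm xyz by (simp add: v_def)
      finally show ?thesis .
    qed
    have eqT: "T u z' = lam (T x v) (T y z)" using L2 R2 by simp
    have "mul w (mul (T u z') (T (T x y) z)) = mul w (mul (T u z') (T (T x v) (T y z)))"
      using P1 P2 eqT by simp
    then have "mul (T u z') (T (T x y) z) = mul (T u z') (T (T x v) (T y z))"
      using mul_left_cancel[of w "mul (T u z') (T (T x y) z)" "mul (T u z') (T (T x v) (T y z))"] S xyz by simp
    then have L3: "T (T x y) z = T (T x v) (T y z)"
      using mul_left_cancel[of "T u z'" "T (T x y) z" "T (T x v) (T y z)"] S xyz by simp
    show ?thesis using fab xyz S L2 R2 L3 e1 by (simp add: u_def z'_def v_def w_def)
  qed
  have ybe: "ybe_solution S f"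
    unfolding ybe_solution_def
  proof (intro conjI ballI)
    show "S \<noteq> {}" using e_in by blast
    show "bij_betw f (S \<times> S) (S \<times> S)"
    proof (rule bij_betw_byWitness[where f' = "\<lambda>(u,t). (add (mul u t) (neg u), mul (bar (add (mul u t) (neg u))) (mul u t))"])
      show "\<forall>p\<in>S \<times> S. (\<lambda>(u,t). (add (mul u t) (neg u), mul (bar (add (mul u t) (neg u))) (mul u t))) (f p) = p"
      proof
        fix p assume "p \<in> S \<times> S"
        then obtain a b where ab: "p = (a,b)" "a\<in>S" "b\<in>S" by blast
        have "add (mul a b) (neg (lam a b)) = a" using ab by (simp add: mul_def)
        then show "(\<lambda>(u,t). (add (mul u t) (neg u), mul (bar (add (mul u t) (neg u))) (mul u t))) (f p) = p"
          using ab fab Tm by simp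
      qed
      show "\<forall>p\<in>S \<times> S. f ((\<lambda>(u,t). (add (mul u t) (neg u), mul (bar (add (mul u t) (neg u))) (mul u t))) p) = p"
      proof
        fix p assume "p \<in> S \<times> S"
        then obtain u t where ut: "p = (u,t)" "u\<in>S" "t\<in>S" by blast
        define m where "m = mul u t"
        define a where "a = add m (neg u)"
        define b where "b = mul (bar a) m"
        have S: "m\<in>S" "a\<in>S" "b\<in>S" using ut by (auto simp: m_def a_def b_def)
        have mab: "mul a b = m" using S by (simp add: b_def)
        have "lam a b = add (neg a) m" using S by (simp add: lam_eq mab)
        also have "\<dots> = u" using S ut by (simp add: a_def neg_add)
        finally have lab: "lam a b = u" .
        have e1: "mul u (T a b) = mul u t" using Tm[of a b] S lab mab m_def by simp
        have "T a b = mul (bar u) (mul u (T a b))" using S ut by simp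
        also have "\<dots> = t" using e1 ut by simp
        finally have "T a b = t" .
        then show "f ((\<lambda>(u,t). (add (mul u t) (neg u), mul (bar (add (mul u t) (neg u))) (mul u t))) p) = p"
          using ut fab S lab by (simp add: m_def[symmetric] a_def[symmetric] b_def[symmetric])
      qed
      show "f ` (S \<times> S) \<subseteq> S \<times> S" using fab by auto
      show "(\<lambda>(u,t). (add (mul u t) (neg u), mul (bar (add (mul u t) (neg u))) (mul u t))) ` (S \<times> S) \<subseteq> S \<times> S"
        by auto
    qed
    fix t assume "t \<in> S \<times> S \<times> S"
    then obtain x y z where xyz: "t = (x,y,z)" "x\<in>S" "y\<in>S" "z\<in>S" by blast
    have L: "r12 f (r23 f (r12 f t)) = (fst (f (fst (f (x,y)), fst (f (snd (f (x,y)), z)))),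
       snd (f (fst (f (x,y)), fst (f (snd (f (x,y)), z)))), snd (f (snd (f (x, y)), z)))"
      by (simp add: xyz(1) r12_def r23_def split_def)
    have R: "r23 f (r12 f (r23 f t)) = (fst (f (x, fst (f (y,z)))),
       fst (f (snd (f (x, fst (f (y,z)))), snd (f (y,z)))), snd (f (snd (f (x, fst (f (y,z)))), snd (f (y,z)))))"
      by (simp add: xyz(1) r12_def r23_def split_def)
    show "r12 f (r23 f (r12 f t)) = r23 f (r12 f (r23 f t))"
      unfolding L R using braid[OF xyz(2-4)] by simp
  qed
  have barT: "a\<in>S \<Longrightarrow> b\<in>S \<Longrightarrow> bar (T a b) = add (bar (mul a b)) (neg (bar b))" for a b
  proof -
    assume ab: "a\<in>S" "b\<in>S"
    define m where "m = mul a b"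
    have m: "m\<in>S" using ab by (simp add: m_def)
    have "bar (T a b) = bar (mul (bar (lam a b)) m)" using Tb[OF ab] by (simp add: m_def)
    also have "\<dots> = mul (bar m) (bar (bar (lam a b)))" using bar_mul[of "bar (lam a b)" m] ab m by simp
    also have "\<dots> = mul (bar m) (lam a b)" using ab by simp
    also have "\<dots> = add (bar m) (lam (bar m) (lam a b))" by (simp add: mul_def)
    also have "lam a b = add (neg a) m" using ab by (simp add: lam_eq m_def)
    also have "lam (bar m) (add (neg a) m) = add (neg (lam (bar m) a)) (neg (bar m))"
      using ab m by (simp add: lam_add lam_neg, simp add: lam_eq)
    also have "lam (bar m) a = add (neg (bar m)) (bar b)"
    proof -
      have "lam (bar m) a = lam (bar b) (lam (bar a) a)" using ab by (simp add: m_def bar_mul lam_mul)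
      also have "lam (bar a) a = neg (bar a)" using ab by (simp add: lam_eq)
      also have "lam (bar b) (neg (bar a)) = neg (lam (bar b) (bar a))" using ab by (simp add: lam_neg)
      also have "lam (bar b) (bar a) = add (neg (bar b)) (bar m)" using ab by (simp add: lam_eq m_def bar_mul)
      finally show ?thesis using ab m by (simp add: neg_add)
    qed
    finally show ?thesis using ab m by (simp add: neg_add m_def)
  qed
  have nd: "nondegenerate S f"
    unfolding nondegenerate_def
  proof (intro conjI ballI)
    fix a assume a: "a\<in>S"
    show "bij_betw (\<lambda>y. fst (f (a, y))) S S"
      by (rule bij_betw_byWitness[where f'="ilam a"]) (auto simp: a f1)
  next
    fix b assume b: "b\<in>S"
    show "bij_betw (\<lambda>x. snd (f (x, b))) S S"
    proof (rule bij_betw_byWitness[where f'="\<lambda>t. mul (bar (add (bar t) (bar b))) (bar b)"])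
      show "\<forall>a\<in>S. mul (bar (add (bar (snd (f (a, b)))) (bar b))) (bar b) = a"
      proof
        fix a assume a: "a\<in>S"
        have "snd (f (a,b)) = T a b" by (simp add: T_def)
        then show "mul (bar (add (bar (snd (f (a, b)))) (bar b))) (bar b) = a"
          using a b by (simp add: barT)
      qed
      show "\<forall>t\<in>S. snd (f (mul (bar (add (bar t) (bar b))) (bar b), b)) = t"
      proof
        fix t assume t: "t\<in>S"
        define a where "a = mul (bar (add (bar t) (bar b))) (bar b)"
        have a: "a \<in> S" using t b by (simp add: a_def)
        have "mul a b = bar (add (bar t) (bar b))" using a t b by (simp add: a_def)
        then have "bar (T a b) = bar t" using a b t barT by simp
        then have "bar (bar (T a b)) = bar (bar t)" by simp
        then have "T a b = t" using a b t by simp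
        then show "snd (f (mul (bar (add (bar t) (bar b))) (bar b), b)) = t" by (simp add: T_def a_def)
      qed
      show "(\<lambda>x. snd (f (x, b))) ` S \<subseteq> S" using f2 b by auto
      show "(\<lambda>t. mul (bar (add (bar t) (bar b))) (bar b)) ` S \<subseteq> S" using b by auto
    qed
  qed
  show ?thesis using ybe nd by blast
qed

definition lamo where "lamo a b = add (add a (lam a b)) (neg a)"
definition ilamo where "ilamo a x = ilam a (add (add (neg a) x) a)"

lemma opposite: "lbrace S (\<lambda>x y. add y x) e neg lamo ilamo"
proof
  fix a b c x y
  show "a\<in>S \<Longrightarrow> b\<in>S \<Longrightarrow> add b a \<in> S" by simp
  show "e \<in> S" by simp
  show "a\<in>S \<Longrightarrow> neg a \<in> S" by simp
  show "a\<in>S \<Longrightarrow> b\<in>S \<Longrightarrow> c\<in>S \<Longrightarrow> add c (add b a) = add (add c b) a" by simp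
  show "a\<in>S \<Longrightarrow> add a e = a" by simp
  show "a\<in>S \<Longrightarrow> add e a = a" by simp
  show "a\<in>S \<Longrightarrow> add a (neg a) = e" by simp
  show "a\<in>S \<Longrightarrow> add (neg a) a = e" by simp
  show "a\<in>S \<Longrightarrow> b\<in>S \<Longrightarrow> lamo a b \<in> S" by (simp add: lamo_def)
  show "a\<in>S \<Longrightarrow> x\<in>S \<Longrightarrow> y\<in>S \<Longrightarrow> lamo a (add y x) = add (lamo a y) (lamo a x)"
    by (simp add: lamo_def lam_add)
  show "a\<in>S \<Longrightarrow> b\<in>S \<Longrightarrow> ilamo a b \<in> S" by (simp add: ilamo_def)
  show "a\<in>S \<Longrightarrow> x\<in>S \<Longrightarrow> lamo a (ilamo a x) = x" by (simp add: lamo_def ilamo_def)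
  show "a\<in>S \<Longrightarrow> x\<in>S \<Longrightarrow> ilamo a (lamo a x) = x" by (simp add: lamo_def ilamo_def)
  show "a\<in>S \<Longrightarrow> b\<in>S \<Longrightarrow> c\<in>S \<Longrightarrow> lamo (add (lamo a b) a) c = lamo a (lamo b c)"
  proof -
    assume S: "a\<in>S" "b\<in>S" "c\<in>S"
    have "add (lamo a b) a = mul a b" using S by (simp add: lamo_def mul_def)
    then show ?thesis using S by (simp add: lamo_def lam_mul lam_mul0 lam_add lam_neg neg_add mul_def)
  qed
  show "x\<in>S \<Longrightarrow> lamo e x = x" by (simp add: lamo_def)
qed

theorem solution_op:
  fixes f :: "'a \<times> 'a \<Rightarrow> 'a \<times> 'a"
  assumes f1: "\<And>a b. a\<in>S \<Longrightarrow> b\<in>S \<Longrightarrow> fst (f (a,b)) = add (mul a b) (neg a)"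
    and f2: "\<And>a b. a\<in>S \<Longrightarrow> b\<in>S \<Longrightarrow> snd (f (a,b)) \<in> S"
    and f3: "\<And>a b. a\<in>S \<Longrightarrow> b\<in>S \<Longrightarrow> mul (fst (f (a,b))) (snd (f (a,b))) = mul a b"
  shows "ybe_solution S f \<and> nondegenerate S f"
proof -
  have mo: "a\<in>S \<Longrightarrow> b\<in>S \<Longrightarrow> lbrace.mul (\<lambda>x y. add y x) lamo a b = mul a b" for a b
    by (simp add: lbrace.mul_def[OF opposite] lamo_def mul_def)
  show ?thesis
  proof (rule lbrace.solution[OF opposite])
    fix a b assume ab: "a\<in>S" "b\<in>S"
    show "fst (f (a,b)) = lamo a b" using f1 ab by (simp add: lamo_def mul_def)
    show "snd (f (a,b)) \<in> S" using f2 ab by simp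
    show "lbrace.mul (\<lambda>x y. add y x) lamo (fst (f (a,b))) (snd (f (a,b))) = lbrace.mul (\<lambda>x y. add y x) lamo a b"
      using f1 f2 f3 ab mo by simp
  qed
qed

end


definition cj :: "('a, 'b) monoid_scheme \<Rightarrow> 'a \<Rightarrow> 'a \<Rightarrow> 'a" where
  "cj G x h = x \<otimes>\<^bsub>G\<^esub> h \<otimes>\<^bsub>G\<^esub> inv\<^bsub>G\<^esub> x"

context group begin

lemma cancel1[simp]: "x\<in>carrier G \<Longrightarrow> y\<in>carrier G \<Longrightarrow> x \<otimes> (inv x \<otimes> y) = y"
  by (simp add: m_assoc[symmetric])
lemma cancel2[simp]: "x\<in>carrier G \<Longrightarrow> y\<in>carrier G \<Longrightarrow> inv x \<otimes> (x \<otimes> y) = y"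
  by (simp add: m_assoc[symmetric])

lemma cj_closed[simp]: "x\<in>carrier G \<Longrightarrow> h\<in>carrier G \<Longrightarrow> cj G x h \<in> carrier G"
  by (simp add: cj_def)
lemma cj_mult: "x\<in>carrier G \<Longrightarrow> h\<in>carrier G \<Longrightarrow> k\<in>carrier G \<Longrightarrow> cj G x (h \<otimes> k) = cj G x h \<otimes> cj G x k"
  by (simp add: cj_def m_assoc)
lemma cj_inv: "x\<in>carrier G \<Longrightarrow> h\<in>carrier G \<Longrightarrow> cj G x (inv h) = inv (cj G x h)"
  by (simp add: cj_def m_assoc inv_mult_group)
lemma cj_cj: "x\<in>carrier G \<Longrightarrow> y\<in>carrier G \<Longrightarrow> h\<in>carrier G \<Longrightarrow> cj G x (cj G y h) = cj G (x \<otimes> y) h"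
  by (simp add: cj_def m_assoc inv_mult_group)
lemma cj_one[simp]: "h\<in>carrier G \<Longrightarrow> cj G \<one> h = h"
  by (simp add: cj_def)
lemma cj_one2[simp]: "x\<in>carrier G \<Longrightarrow> cj G x \<one> = \<one>"
  by (simp add: cj_def)
lemma cj_inv_cancel1[simp]: "x\<in>carrier G \<Longrightarrow> h\<in>carrier G \<Longrightarrow> cj G (inv x) (cj G x h) = h"
  by (simp add: cj_cj)
lemma cj_inv_cancel2[simp]: "x\<in>carrier G \<Longrightarrow> h\<in>carrier G \<Longrightarrow> cj G x (cj G (inv x) h) = h"
  by (simp add: cj_cj)

end


locale cset = group G for G (structure) +
  fixes K A :: "'a set" and \<psi> \<phi> :: "'a set \<Rightarrow> 'a set" and \<psi>u \<phi>u :: "'a \<Rightarrow> 'a"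
    and \<alpha> \<beta> :: "'a \<Rightarrow> 'a \<Rightarrow> 'a"
  assumes cK: "central_subgroup G K"
    and sA: "subgroup A G" and KA: "K \<subseteq> A"
    and comA: "\<forall>a \<in> A. \<forall>b \<in> A. (K #>\<^bsub>G\<^esub> a) \<otimes>\<^bsub>G Mod K\<^esub> (K #>\<^bsub>G\<^esub> b)
                         = (K #>\<^bsub>G\<^esub> b) \<otimes>\<^bsub>G Mod K\<^esub> (K #>\<^bsub>G\<^esub> a)"
    and epsi: "\<psi> \<in> endA G K A" and ephi: "\<phi> \<in> endA G K A"
    and balpha: "\<alpha> \<in> bilinB G K" and bbeta: "\<beta> \<in> bilinB G K"
    and lpsi: "lifting G K A \<psi> \<psi>u" and lphi: "lifting G K A \<phi> \<phi>u"
begin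

lemma Ksub: "subgroup K G" using cK unfolding central_subgroup_def by blast
lemma Kcar[simp]: "k \<in> K \<Longrightarrow> k \<in> carrier G" by (rule subgroup.mem_carrier[OF Ksub])
lemma Acar[simp]: "a \<in> A \<Longrightarrow> a \<in> carrier G" by (rule subgroup.mem_carrier[OF sA])
lemma cent: "k \<in> K \<Longrightarrow> g \<in> carrier G \<Longrightarrow> k \<otimes> g = g \<otimes> k" using cK unfolding central_subgroup_def by blast
lemma K_one[simp]: "\<one> \<in> K" by (rule subgroup.one_closed[OF Ksub])
lemma K_mult[simp]: "k \<in> K \<Longrightarrow> l \<in> K \<Longrightarrow> k \<otimes> l \<in> K" by (rule subgroup.m_closed[OF Ksub])
lemma K_inv[simp]: "k \<in> K \<Longrightarrow> inv k \<in> K" by (rule subgroup.m_inv_closed[OF Ksub])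
lemma A_mult[simp]: "k \<in> A \<Longrightarrow> l \<in> A \<Longrightarrow> k \<otimes> l \<in> A" by (rule subgroup.m_closed[OF sA])
lemma A_inv[simp]: "k \<in> A \<Longrightarrow> inv k \<in> A" by (rule subgroup.m_inv_closed[OF sA])

lemma Knormal: "K \<lhd> G"
proof (rule normalI[OF Ksub], intro ballI)
  fix x assume x: "x \<in> carrier G"
  show "K #> x = x <# K" unfolding r_coset_def l_coset_def
    by (rule SUP_cong) (simp_all add: cent[OF _ x])
qed

lemma coset_eq: "x \<in> carrier G \<Longrightarrow> y \<in> carrier G \<Longrightarrow> K #> x = K #> y \<Longrightarrow> \<exists>k\<in>K. x = k \<otimes> y"
proof -
  assume xy: "x \<in> carrier G" "y \<in> carrier G" "K #> x = K #> y"
  have "x \<in> K #> y" using rcos_self[OF xy(1) Ksub] xy(3) by simp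
  then show ?thesis unfolding r_coset_def by auto
qed

lemma comm_modK: "a \<in> A \<Longrightarrow> b \<in> A \<Longrightarrow> \<exists>k\<in>K. a \<otimes> b = k \<otimes> (b \<otimes> a)"
proof -
  assume ab: "a \<in> A" "b \<in> A"
  have "K #> (a \<otimes> b) = K #> (b \<otimes> a)"
    using comA ab normal.rcos_sum[OF Knormal] by simp
  then show ?thesis using coset_eq ab by simp
qed

lemma cj_K[simp]: "k \<in> K \<Longrightarrow> x \<in> carrier G \<Longrightarrow> cj G x k = k"
  by (simp add: cj_def cent[symmetric] m_assoc)

lemma cj_central[simp]: "k \<in> K \<Longrightarrow> h \<in> carrier G \<Longrightarrow> cj G k h = h"
  by (simp add: cj_def cent m_assoc)

lemma cj_Kmul1[simp]: "k \<in> K \<Longrightarrow> x \<in> carrier G \<Longrightarrow> h \<in> carrier G \<Longrightarrow> cj G (k \<otimes> x) h = cj G x h"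
  by (simp add: cj_cj[symmetric])

lemma cj_Kmul2[simp]: "k \<in> K \<Longrightarrow> x \<in> carrier G \<Longrightarrow> h \<in> carrier G \<Longrightarrow> cj G (x \<otimes> k) h = cj G x h"
  by (simp add: cent[symmetric])

lemma cj_Acomm: "a \<in> A \<Longrightarrow> b \<in> A \<Longrightarrow> h \<in> carrier G \<Longrightarrow> cj G a (cj G b h) = cj G b (cj G a h)"
proof -
  assume ab: "a \<in> A" "b \<in> A" "h \<in> carrier G"
  obtain k where k: "k \<in> K" "a \<otimes> b = k \<otimes> (b \<otimes> a)" using comm_modK ab by blast
  show ?thesis using ab k by (simp add: cj_cj)
qed

definition liftok where
  "liftok u \<longleftrightarrow> (\<forall>g\<in>carrier G. u g \<in> A) \<and>
     (\<forall>g\<in>carrier G. \<forall>h\<in>carrier G. \<exists>k\<in>K. u (g \<otimes> h) = k \<otimes> (u g \<otimes> u h)) \<and> (\<forall>k\<in>K. u k \<in> K)"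

lemma liftok_of: 
  assumes e: "\<chi> \<in> endA G K A" and l: "lifting G K A \<chi> u" shows "liftok u"
proof -
  have hom: "\<chi> \<in> hom (G Mod K) (G Mod K)" using e by (simp add: endA_def)
  have lf: "\<And>g. g \<in> carrier G \<Longrightarrow> u g \<in> A \<and> K #> u g = \<chi> (K #> g)" using l by (simp add: lifting_def)
  have cos: "\<And>g. g \<in> carrier G \<Longrightarrow> K #> g \<in> carrier (G Mod K)"
    by (simp add: FactGroup_def rcosetsI Ksub subgroup.subset)
  have grp: "group (G Mod K)" using normal.factorgroup_is_group[OF Knormal] .
  show ?thesis unfolding liftok_def
  proof (intro conjI ballI)
    fix g assume "g \<in> carrier G" then show "u g \<in> A" using lf by simp
  next
    fix g h assume gh: "g \<in> carrier G" "h \<in> carrier G"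
    have "K #> u (g \<otimes> h) = \<chi> (K #> (g \<otimes> h))" using lf gh by simp
    also have "K #> (g \<otimes> h) = (K #> g) \<otimes>\<^bsub>G Mod K\<^esub> (K #> h)" using normal.rcos_sum[OF Knormal] gh by simp
    also have "\<chi> \<dots> = \<chi> (K #> g) \<otimes>\<^bsub>G Mod K\<^esub> \<chi> (K #> h)" using hom_mult[OF hom cos cos] gh by simp
    also have "\<dots> = K #> (u g \<otimes> u h)"
    proof -
      have "\<chi> (K #> g) = K #> u g" "\<chi> (K #> h) = K #> u h" using lf gh by auto
      then show ?thesis using gh lf normal.rcos_sum[OF Knormal, of "u g" "u h"] by simp
    qed
    finally show "\<exists>k\<in>K. u (g \<otimes> h) = k \<otimes> (u g \<otimes> u h)" using coset_eq gh lf by simp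
  next
    fix k assume k: "k \<in> K"
    have "K #> u k = \<chi> (K #> k)" using lf k by simp
    also have "K #> k = K" using subgroup.rcos_const[OF Ksub is_group k] .
    also have "\<chi> K = K" using hom_one[OF hom grp grp] by simp
    finally have "K #> u k = K" .
    then show "u k \<in> K" using rcos_self[OF _ Ksub, of "u k"] lf k by simp
  qed
qed

lemma liftok_psi: "liftok \<psi>u" using liftok_of[OF epsi lpsi] .
lemma liftok_phi: "liftok \<phi>u" using liftok_of[OF ephi lphi] .


lemma lcomm_K: "k \<in> K \<Longrightarrow> a \<in> carrier G \<Longrightarrow> b \<in> carrier G \<Longrightarrow> a \<otimes> (k \<otimes> b) = k \<otimes> (a \<otimes> b)"
proof -
  assume a: "k \<in> K" "a \<in> carrier G" "b \<in> carrier G"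
  have "a \<otimes> (k \<otimes> b) = (a \<otimes> k) \<otimes> b" using a by (simp add: m_assoc)
  also have "a \<otimes> k = k \<otimes> a" using a cent by simp
  finally show ?thesis using a by (simp add: m_assoc)
qed
lemma comm_K: "k \<in> K \<Longrightarrow> a \<in> carrier G \<Longrightarrow> a \<otimes> k = k \<otimes> a"
  by (simp add: cent)

definition cjhom where
  "cjhom u \<longleftrightarrow> (\<forall>g\<in>carrier G. u g \<in> A) \<and>
     (\<forall>g\<in>carrier G. \<forall>h\<in>carrier G. \<forall>x\<in>carrier G. cj G (u (g \<otimes> h)) x = cj G (u g) (cj G (u h) x)) \<and>
     (\<forall>k\<in>K. \<forall>x\<in>carrier G. cj G (u k) x = x)"

lemma liftok_cjhom: "liftok u \<Longrightarrow> cjhom u"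
  unfolding cjhom_def
proof (intro conjI ballI)
  assume l: "liftok u"
  fix g assume "g \<in> carrier G" then show "u g \<in> A" using l by (simp add: liftok_def)
next
  assume l: "liftok u"
  fix g h x assume ghx: "g \<in> carrier G" "h \<in> carrier G" "x \<in> carrier G"
  obtain k where k: "k\<in>K" "u (g \<otimes> h) = k \<otimes> (u g \<otimes> u h)" using l ghx unfolding liftok_def by blast
  have "u g \<in> A" "u h \<in> A" using l ghx by (auto simp: liftok_def)
  then show "cj G (u (g \<otimes> h)) x = cj G (u g) (cj G (u h) x)" using k ghx by (simp add: cj_cj)
next
  assume l: "liftok u"
  fix k x assume "k \<in> K" "x \<in> carrier G"
  then show "cj G (u k) x = x" using l by (simp add: liftok_def)
qed

lemma cjhom_psi: "cjhom \<psi>u" by (rule liftok_cjhom[OF liftok_psi])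
lemma cjhom_phi: "cjhom \<phi>u" by (rule liftok_cjhom[OF liftok_phi])

context
  fixes u assumes u: "cjhom u"
begin

lemma ch_A[simp]: "g \<in> carrier G \<Longrightarrow> u g \<in> A" using u by (simp add: cjhom_def)
lemma ch_car[simp]: "g \<in> carrier G \<Longrightarrow> u g \<in> carrier G" by simp
lemma ch_mult: "g \<in> carrier G \<Longrightarrow> h \<in> carrier G \<Longrightarrow> x \<in> carrier G \<Longrightarrow> cj G (u (g \<otimes> h)) x = cj G (u g) (cj G (u h) x)"
  using u by (simp add: cjhom_def)
lemma ch_K[simp]: "k \<in> K \<Longrightarrow> x \<in> carrier G \<Longrightarrow> cj G (u k) x = x" using u by (simp add: cjhom_def)
lemma ch_one[simp]: "x \<in> carrier G \<Longrightarrow> cj G (u \<one>) x = x" by simp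
lemma ch_inv1[simp]: "g \<in> carrier G \<Longrightarrow> x \<in> carrier G \<Longrightarrow> cj G (u (inv g)) (cj G (u g) x) = x"
  using ch_mult[of "inv g" g x, symmetric] by simp
lemma ch_inv2[simp]: "g \<in> carrier G \<Longrightarrow> x \<in> carrier G \<Longrightarrow> cj G (u g) (cj G (u (inv g)) x) = x"
  using ch_mult[of g "inv g" x, symmetric] by simp
lemma ch_inv: "g \<in> carrier G \<Longrightarrow> x \<in> carrier G \<Longrightarrow> cj G (u (inv g)) x = cj G (inv (u g)) x"
proof -
  assume gx: "g \<in> carrier G" "x \<in> carrier G"
  have "cj G (u (inv g)) x = cj G (u (inv g)) (cj G (u g) (cj G (inv (u g)) x))" using gx by simp
  also have "\<dots> = cj G (inv (u g)) x" using gx by (simp del: cj_inv_cancel2)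
  finally show ?thesis .
qed
lemma ch_Kmul1[simp]: "k \<in> K \<Longrightarrow> g \<in> carrier G \<Longrightarrow> x \<in> carrier G \<Longrightarrow> cj G (u (k \<otimes> g)) x = cj G (u g) x"
  by (simp add: ch_mult)
lemma ch_Kmul2[simp]: "k \<in> K \<Longrightarrow> g \<in> carrier G \<Longrightarrow> x \<in> carrier G \<Longrightarrow> cj G (u (g \<otimes> k)) x = cj G (u g) x"
  by (simp add: ch_mult)

end

lemma ch_comm: "cjhom u \<Longrightarrow> cjhom v \<Longrightarrow> g \<in> carrier G \<Longrightarrow> h \<in> carrier G \<Longrightarrow> x \<in> carrier G \<Longrightarrow>
   cj G (u g) (cj G (v h) x) = cj G (v h) (cj G (u g) x)"
  by (rule cj_Acomm) simp_all

lemma ch_cj[simp]: "cjhom u \<Longrightarrow> y \<in> carrier G \<Longrightarrow> g \<in> carrier G \<Longrightarrow> x \<in> carrier G \<Longrightarrow>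
   cj G (u (cj G y g)) x = cj G (u g) x"
proof -
  assume a: "cjhom u" "y \<in> carrier G" "g \<in> carrier G" "x \<in> carrier G"
  have "cj G (u (cj G y g)) x = cj G (u y) (cj G (u g) (cj G (u (inv y)) x))"
    using a unfolding cj_def[of G y g] by (simp add: ch_mult)
  also have "\<dots> = cj G (u g) (cj G (u y) (cj G (u (inv y)) x))" using a by (simp add: ch_comm)
  also have "\<dots> = cj G (u g) x" using a by simp
  finally show ?thesis .
qed

context
  fixes b assumes b: "b \<in> bilinB G K"
begin
lemma bl_K[simp]: "g \<in> carrier G \<Longrightarrow> h \<in> carrier G \<Longrightarrow> b g h \<in> K" using b by (simp add: bilinB_def)
lemma bl_car[simp]: "g \<in> carrier G \<Longrightarrow> h \<in> carrier G \<Longrightarrow> b g h \<in> carrier G" by simp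
lemma bl_m1: "g \<in> carrier G \<Longrightarrow> h \<in> carrier G \<Longrightarrow> k \<in> carrier G \<Longrightarrow> b (g \<otimes> h) k = b g k \<otimes> b h k"
  using b by (simp add: bilinB_def)
lemma bl_m2: "g \<in> carrier G \<Longrightarrow> h \<in> carrier G \<Longrightarrow> k \<in> carrier G \<Longrightarrow> b g (h \<otimes> k) = b g h \<otimes> b g k"
  using b by (simp add: bilinB_def)
lemma bl_K1[simp]: "k \<in> K \<Longrightarrow> g \<in> carrier G \<Longrightarrow> b k g = \<one>" using b by (simp add: bilinB_def)
lemma bl_K2[simp]: "k \<in> K \<Longrightarrow> g \<in> carrier G \<Longrightarrow> b g k = \<one>" using b by (simp add: bilinB_def)
lemma bl_inv1: "g \<in> carrier G \<Longrightarrow> h \<in> carrier G \<Longrightarrow> b (inv g) h = inv (b g h)"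
proof -
  assume gh: "g \<in> carrier G" "h \<in> carrier G"
  have "b (inv g) h \<otimes> b g h = \<one>" using bl_m1[of "inv g" g h, symmetric] gh by simp
  then show ?thesis using inv_equality[of "b (inv g) h" "b g h"] gh by simp
qed
lemma bl_inv2: "g \<in> carrier G \<Longrightarrow> h \<in> carrier G \<Longrightarrow> b g (inv h) = inv (b g h)"
proof -
  assume gh: "g \<in> carrier G" "h \<in> carrier G"
  have "b g (inv h) \<otimes> b g h = \<one>" using bl_m2[of g "inv h" h, symmetric] gh by simp
  then show ?thesis using inv_equality[of "b g (inv h)" "b g h"] gh by simp
qed
lemma bl_cj1[simp]: "y \<in> carrier G \<Longrightarrow> g \<in> carrier G \<Longrightarrow> h \<in> carrier G \<Longrightarrow> b (cj G y g) h = b g h"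
proof -
  assume a: "y \<in> carrier G" "g \<in> carrier G" "h \<in> carrier G"
  have "b (cj G y g) h = b y h \<otimes> b g h \<otimes> inv (b y h)" using a by (simp add: cj_def bl_m1 bl_inv1)
  also have "\<dots> = b g h" using a cent[of "b y h" "b g h"] by (simp add: m_assoc)
  finally show ?thesis .
qed
lemma bl_cj2[simp]: "y \<in> carrier G \<Longrightarrow> g \<in> carrier G \<Longrightarrow> h \<in> carrier G \<Longrightarrow> b g (cj G y h) = b g h"
proof -
  assume a: "y \<in> carrier G" "g \<in> carrier G" "h \<in> carrier G"
  have "b g (cj G y h) = b g y \<otimes> b g h \<otimes> inv (b g y)" using a by (simp add: cj_def bl_m2 bl_inv2)
  also have "\<dots> = b g h" using a cent[of "b g y" "b g h"] by (simp add: m_assoc)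
  finally show ?thesis .
qed
end

lemma pl: "k \<in> K \<Longrightarrow> a \<in> carrier G \<Longrightarrow> b \<in> carrier G \<Longrightarrow> a \<otimes> (k \<otimes> b) = k \<otimes> (a \<otimes> b)"
  by (rule lcomm_K)
lemma pr: "k \<in> K \<Longrightarrow> a \<in> carrier G \<Longrightarrow> a \<otimes> k = k \<otimes> a"
  by (rule comm_K)
lemmas pull = pl pr

lemma bilinB_inv: assumes b: "b \<in> bilinB G K" shows "(\<lambda>g h. b (inv g) h) \<in> bilinB G K"
  unfolding bilinB_def
proof (intro CollectI conjI ballI)
  fix g h k assume a: "g \<in> carrier G" "h \<in> carrier G" "k \<in> carrier G"
  show "b (inv (g \<otimes> h)) k = b (inv g) k \<otimes> b (inv h) k"
    using a b by (simp add: inv_mult_group bl_m1 cent)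
  show "b (inv g) (h \<otimes> k) = b (inv g) h \<otimes> b (inv g) k" using a b by (simp add: bl_m2)
next
  fix g h assume a: "g \<in> carrier G" "h \<in> carrier G"
  show "b (inv g) h \<in> K" using a b by simp
next
  fix k g assume a: "k \<in> K" "g \<in> carrier G"
  show "b (inv k) g = \<one>" using a b by simp
  show "b (inv g) k = \<one>" using a b by simp
qed

lemma bilinB_mult: assumes b: "b \<in> bilinB G K" and c: "c \<in> bilinB G K"
  shows "(\<lambda>g h. b g h \<otimes> c g h) \<in> bilinB G K"
  unfolding bilinB_def
proof (intro CollectI conjI ballI)
  fix g h k assume a: "g \<in> carrier G" "h \<in> carrier G" "k \<in> carrier G"
  show "b (g \<otimes> h) k \<otimes> c (g \<otimes> h) k = b g k \<otimes> c g k \<otimes> (b h k \<otimes> c h k)"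
    using a b c by (simp add: bl_m1 m_assoc pull[of "c g k"])
  show "b g (h \<otimes> k) \<otimes> c g (h \<otimes> k) = b g h \<otimes> c g h \<otimes> (b g k \<otimes> c g k)"
    using a b c by (simp add: bl_m2 m_assoc pull[of "c g h"])
next
  fix g h assume a: "g \<in> carrier G" "h \<in> carrier G"
  show "b g h \<otimes> c g h \<in> K" using a b c by simp
next
  fix k g assume a: "k \<in> K" "g \<in> carrier G"
  show "b k g \<otimes> c k g = \<one>" using a b c by simp
  show "b g k \<otimes> c g k = \<one>" using a b c by simp
qed

definition dd where "dd a = \<psi>u a \<otimes> inv (\<phi>u a)"
definition \<gamma> where "\<gamma> a b = \<beta> (inv a) b \<otimes> \<alpha> a b"
definition addG where "addG x y = x \<otimes> cj G (\<phi>u x) y \<otimes> \<beta> x y"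
definition negG where "negG x = cj G (\<phi>u (inv x)) (inv x) \<otimes> \<beta> x x"
definition lamG where "lamG a b = cj G (dd a) b \<otimes> \<beta> (inv a) b \<otimes> \<alpha> a b"
definition ilamG where "ilamG a b = lamG (inv a) b"

lemma gamma_bil: "\<gamma> \<in> bilinB G K"
proof -
  have "(\<lambda>g h. \<beta> (inv g) h \<otimes> \<alpha> g h) \<in> bilinB G K"
    by (rule bilinB_mult[OF bilinB_inv[OF bbeta] balpha])
  then show ?thesis by (simp add: \<gamma>_def[abs_def])
qed

lemmas chP = cjhom_psi cjhom_phi
lemmas BL = balpha bbeta gamma_bil

lemma dd_cj: "g \<in> carrier G \<Longrightarrow> y \<in> carrier G \<Longrightarrow> cj G (dd g) y = cj G (\<psi>u g) (cj G (\<phi>u (inv g)) y)"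
  by (simp add: dd_def cj_cj[symmetric] ch_inv[OF cjhom_phi] chP)

lemma dd_A[simp]: "g \<in> carrier G \<Longrightarrow> dd g \<in> A" by (simp add: dd_def chP)

lemma cjhom_dd: "cjhom dd"
  unfolding cjhom_def
proof (intro conjI ballI)
  fix g assume "g \<in> carrier G" then show "dd g \<in> A" by simp
next
  fix g h x assume a: "g \<in> carrier G" "h \<in> carrier G" "x \<in> carrier G"
  have "cj G (dd (g \<otimes> h)) x = cj G (\<psi>u g) (cj G (\<psi>u h) (cj G (\<phi>u (inv h)) (cj G (\<phi>u (inv g)) x)))"
    using a by (simp add: dd_cj inv_mult_group ch_mult chP)
  also have "cj G (\<phi>u (inv h)) (cj G (\<phi>u (inv g)) x) = cj G (\<phi>u (inv g)) (cj G (\<phi>u (inv h)) x)"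
    using a by (simp add: ch_comm chP)
  also have "cj G (\<psi>u h) (cj G (\<phi>u (inv g)) (cj G (\<phi>u (inv h)) x)) = cj G (\<phi>u (inv g)) (cj G (\<psi>u h) (cj G (\<phi>u (inv h)) x))"
    using a by (simp add: ch_comm chP)
  finally show "cj G (dd (g \<otimes> h)) x = cj G (dd g) (cj G (dd h) x)" using a by (simp add: dd_cj chP)
next
  fix k x assume "k \<in> K" "x \<in> carrier G"
  then show "cj G (dd k) x = x" by (simp add: dd_cj chP)
qed

lemmas chA = cjhom_psi cjhom_phi cjhom_dd

lemma lamG_alt: "a \<in> carrier G \<Longrightarrow> b \<in> carrier G \<Longrightarrow> lamG a b = cj G (dd a) b \<otimes> \<gamma> a b"
  by (simp add: lamG_def \<gamma>_def m_assoc chA BL)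

lemma addG_closed[simp]: "x \<in> carrier G \<Longrightarrow> y \<in> carrier G \<Longrightarrow> addG x y \<in> carrier G"
  by (simp add: addG_def chP BL)
lemma negG_closed[simp]: "x \<in> carrier G \<Longrightarrow> negG x \<in> carrier G"
  by (simp add: negG_def chP BL)
lemma lamG_closed[simp]: "x \<in> carrier G \<Longrightarrow> y \<in> carrier G \<Longrightarrow> lamG x y \<in> carrier G"
  by (simp add: lamG_def chA BL)

lemma phi_add: "x \<in> carrier G \<Longrightarrow> y \<in> carrier G \<Longrightarrow> z \<in> carrier G \<Longrightarrow>
   cj G (\<phi>u (addG x y)) z = cj G (\<phi>u x) (cj G (\<phi>u y) z)"
  by (simp add: addG_def ch_mult chP BL)

lemma beta_add: "x \<in> carrier G \<Longrightarrow> y \<in> carrier G \<Longrightarrow> z \<in> carrier G \<Longrightarrow>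
   \<beta> (addG x y) z = \<beta> x z \<otimes> \<beta> y z"
  by (simp add: addG_def bl_m1 chP BL)

lemma addG_assoc: "x \<in> carrier G \<Longrightarrow> y \<in> carrier G \<Longrightarrow> z \<in> carrier G \<Longrightarrow>
   addG (addG x y) z = addG x (addG y z)"
proof -
  assume a: "x \<in> carrier G" "y \<in> carrier G" "z \<in> carrier G"
  have "addG (addG x y) z = x \<otimes> cj G (\<phi>u x) y \<otimes> \<beta> x y \<otimes> cj G (\<phi>u x) (cj G (\<phi>u y) z) \<otimes> (\<beta> x z \<otimes> \<beta> y z)"
    using a by (simp add: addG_def[of "addG x y"] phi_add beta_add) (simp add: addG_def)
  also have "\<dots> = x \<otimes> (cj G (\<phi>u x) y \<otimes> cj G (\<phi>u x) (cj G (\<phi>u y) z) \<otimes> \<beta> y z) \<otimes> (\<beta> x y \<otimes> \<beta> x z)"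
    using a by (simp add: m_assoc pull[of "\<beta> x y"] chP BL, simp add: pull[of "\<beta> y z"] chP BL)
  also have "\<dots> = addG x (addG y z)"
    using a by (simp add: addG_def cj_mult bl_m2 chP BL)
  finally show ?thesis .
qed


lemma addG_e_left: "a \<in> carrier G \<Longrightarrow> addG \<one> a = a" by (simp add: addG_def chP BL)
lemma addG_e_right: "a \<in> carrier G \<Longrightarrow> addG a \<one> = a" by (simp add: addG_def chP BL)

lemma negG_right: "x \<in> carrier G \<Longrightarrow> addG x (negG x) = \<one>"
  by (simp add: addG_def negG_def cj_mult bl_m2 bl_inv2 m_assoc chP BL)

lemma negG_left: "x \<in> carrier G \<Longrightarrow> addG (negG x) x = \<one>"
proof -
  assume x: "x \<in> carrier G"
  have "addG (negG x) x = cj G (\<phi>u (inv x)) (inv x) \<otimes> \<beta> x x \<otimes> cj G (\<phi>u (inv x)) x \<otimes> inv (\<beta> x x)"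
    using x by (simp add: addG_def negG_def bl_m1 bl_inv1 chP BL)
  also have "\<dots> = \<one>"
    using x by (simp add: m_assoc pull[of "\<beta> x x"] cj_inv chP BL)
  finally show ?thesis .
qed

lemma lamG_K[simp]: "k \<in> K \<Longrightarrow> c \<in> carrier G \<Longrightarrow> lamG k c = c"
  by (simp add: lamG_def chA BL)
lemma lamG_onK[simp]: "k \<in> K \<Longrightarrow> a \<in> carrier G \<Longrightarrow> lamG a k = k"
  by (simp add: lamG_def chA BL)
lemma lamG_one[simp]: "c \<in> carrier G \<Longrightarrow> lamG \<one> c = c"
  by simp

lemma lamG_hom: "a \<in> carrier G \<Longrightarrow> b \<in> carrier G \<Longrightarrow> c \<in> carrier G \<Longrightarrow>
    lamG (a \<otimes> b) c = lamG a (lamG b c)"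
proof -
  assume a: "a \<in> carrier G" "b \<in> carrier G" "c \<in> carrier G"
  have "lamG (a \<otimes> b) c = cj G (dd a) (cj G (dd b) c) \<otimes> (\<gamma> a c \<otimes> \<gamma> b c)"
    using a by (simp add: lamG_alt ch_mult bl_m1 chA BL)
  also have "\<dots> = lamG a (lamG b c)"
    using a by (simp add: lamG_alt cj_mult bl_m2 m_assoc pull[of "\<gamma> b c"] chA BL)
  finally show ?thesis .
qed

lemma lamG_Kmul[simp]: "k \<in> K \<Longrightarrow> a \<in> carrier G \<Longrightarrow> c \<in> carrier G \<Longrightarrow> lamG (a \<otimes> k) c = lamG a c"
  by (simp add: lamG_hom)

lemma lamG_cj[simp]: "z \<in> carrier G \<Longrightarrow> y \<in> carrier G \<Longrightarrow> c \<in> carrier G \<Longrightarrow> lamG (cj G z y) c = lamG y c"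
  by (simp add: lamG_alt chA BL)

lemma lamG_lam[simp]: "a \<in> carrier G \<Longrightarrow> b \<in> carrier G \<Longrightarrow> c \<in> carrier G \<Longrightarrow> lamG (lamG a b) c = lamG b c"
  by (simp add: lamG_alt[of a b] chA BL)

lemma lamG_mult: "a \<in> carrier G \<Longrightarrow> x \<in> carrier G \<Longrightarrow> y \<in> carrier G \<Longrightarrow>
    lamG a (x \<otimes> y) = lamG a x \<otimes> lamG a y"
  by (simp add: lamG_alt cj_mult bl_m2 m_assoc pull[of "\<gamma> a x"] chA BL)

lemma lamG_cjA: "z \<in> A \<Longrightarrow> a \<in> carrier G \<Longrightarrow> y \<in> carrier G \<Longrightarrow>
    lamG a (cj G z y) = cj G z (lamG a y)"
  by (simp add: lamG_alt cj_mult cj_Acomm[of "dd a" z] chA BL)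

lemma u_lam[simp]: "cjhom u \<Longrightarrow> a \<in> carrier G \<Longrightarrow> x \<in> carrier G \<Longrightarrow> z \<in> carrier G \<Longrightarrow>
    cj G (u (lamG a x)) z = cj G (u x) z"
  by (simp add: lamG_alt chA BL)

lemma b_lam1[simp]: "b \<in> bilinB G K \<Longrightarrow> a \<in> carrier G \<Longrightarrow> x \<in> carrier G \<Longrightarrow> y \<in> carrier G \<Longrightarrow>
    b (lamG a x) y = b x y"
  by (simp add: lamG_alt bl_m1 chA BL)
lemma b_lam2[simp]: "b \<in> bilinB G K \<Longrightarrow> a \<in> carrier G \<Longrightarrow> x \<in> carrier G \<Longrightarrow> y \<in> carrier G \<Longrightarrow>
    b y (lamG a x) = b y x"
  by (simp add: lamG_alt bl_m2 chA BL)

lemma lamG_add: "a \<in> carrier G \<Longrightarrow> x \<in> carrier G \<Longrightarrow> y \<in> carrier G \<Longrightarrow>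
    lamG a (addG x y) = addG (lamG a x) (lamG a y)"
  by (simp add: addG_def lamG_mult lamG_cjA chA BL)

lemma lamG_mul0: "a \<in> carrier G \<Longrightarrow> b \<in> carrier G \<Longrightarrow> c \<in> carrier G \<Longrightarrow>
    lamG (addG a (lamG a b)) c = lamG a (lamG b c)"
  by (simp add: addG_def lamG_hom chA BL)

lemma lamG_ilam: "a \<in> carrier G \<Longrightarrow> x \<in> carrier G \<Longrightarrow> lamG a (ilamG a x) = x"
  by (simp add: ilamG_def lamG_hom[symmetric])
lemma ilamG_lam: "a \<in> carrier G \<Longrightarrow> x \<in> carrier G \<Longrightarrow> ilamG a (lamG a x) = x"
  by (simp add: ilamG_def lamG_hom[symmetric])

lemma phi_dd: "x \<in> carrier G \<Longrightarrow> y \<in> carrier G \<Longrightarrow> cj G (\<phi>u x) (cj G (dd x) y) = cj G (\<psi>u x) y"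
  by (simp add: dd_cj ch_comm[of \<phi>u \<psi>u] chA)

lemma mulG: "x \<in> carrier G \<Longrightarrow> y \<in> carrier G \<Longrightarrow> addG x (lamG x y) = x \<otimes> cj G (\<psi>u x) y \<otimes> \<alpha> x y"
proof -
  assume a: "x \<in> carrier G" "y \<in> carrier G"
  have 1: "\<beta> x (lamG x y) = \<beta> x y" using a by (simp add: BL)
  have 2: "cj G (\<phi>u x) (lamG x y) = cj G (\<psi>u x) y \<otimes> (inv (\<beta> x y) \<otimes> \<alpha> x y)"
    using a by (simp add: lamG_def cj_mult phi_dd bl_inv1 m_assoc chA BL)
  have "addG x (lamG x y) = x \<otimes> (cj G (\<psi>u x) y \<otimes> (inv (\<beta> x y) \<otimes> \<alpha> x y)) \<otimes> \<beta> x y"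
    unfolding addG_def 1 2 ..
  also have "\<dots> = x \<otimes> cj G (\<psi>u x) y \<otimes> \<alpha> x y"
    using a by (simp add: m_assoc pull[of "\<beta> x y"] chA BL, simp add: pull[of "inv (\<beta> x y)"] chA BL)
  finally show ?thesis .
qed


definition TT where "TT g h = snd (ybe_r G \<psi>u \<phi>u \<alpha> \<beta> (g,h))"
definition FF where "FF g h = fst (ybe_r' G \<psi>u \<phi>u \<alpha> \<beta> (g,h))"
definition TT' where "TT' g h = snd (ybe_r' G \<psi>u \<phi>u \<alpha> \<beta> (g,h))"

lemma r_fst: "fst (ybe_r G \<psi>u \<phi>u \<alpha> \<beta> (g,h)) = lamG g h"
  by (simp add: ybe_r_def lamG_def dd_def cj_def Let_def)

lemma TT_form: "g \<in> carrier G \<Longrightarrow> h \<in> carrier G \<Longrightarrow>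
  TT g h = cj G (inv (\<psi>u h)) (cj G (dd g) (inv h) \<otimes> g \<otimes> cj G (\<psi>u g) h) \<otimes> (\<beta> g h \<otimes> \<alpha> (inv h) g)"
proof -
  assume a: "g \<in> carrier G" "h \<in> carrier G"
  have c: "\<psi>u g \<in> carrier G" "\<psi>u h \<in> carrier G" "\<phi>u g \<in> carrier G" "\<beta> g h \<in> carrier G"
    "\<alpha> (inv h) g \<in> carrier G" using a by (simp_all add: chP BL)
  show ?thesis
    unfolding TT_def ybe_r_def Let_def cj_def dd_def split snd_conv
    using a c by (simp only: m_assoc m_closed inv_closed inv_inv)
qed

lemma TT_closed[simp]: "g \<in> carrier G \<Longrightarrow> h \<in> carrier G \<Longrightarrow> TT g h \<in> carrier G"
  by (simp add: TT_form chA BL)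

lemma TT_eq: "g \<in> carrier G \<Longrightarrow> h \<in> carrier G \<Longrightarrow> addG (lamG g h) (lamG (lamG g h) (TT g h)) = addG g (lamG g h)"
proof -
  assume a: "g \<in> carrier G" "h \<in> carrier G"
  define W where "W = cj G (dd g) (inv h) \<otimes> g \<otimes> cj G (\<psi>u g) h"
  have W: "W \<in> carrier G" using a by (simp add: W_def chA)
  have T: "TT g h = cj G (inv (\<psi>u h)) W \<otimes> (\<beta> g h \<otimes> \<alpha> (inv h) g)" using a by (simp add: TT_form W_def)
  have 1: "cj G (\<psi>u (lamG g h)) (TT g h) = W \<otimes> (\<beta> g h \<otimes> \<alpha> (inv h) g)"
    using a W by (simp add: T cj_mult chA BL)
  have 2: "\<alpha> (lamG g h) (TT g h) = inv (\<alpha> h h) \<otimes> \<alpha> h g \<otimes> \<alpha> h h"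
    using a W by (simp add: T bl_m2 W_def bl_inv2 chA BL)
  have "addG (lamG g h) (lamG (lamG g h) (TT g h)) =
     lamG g h \<otimes> cj G (\<psi>u (lamG g h)) (TT g h) \<otimes> \<alpha> (lamG g h) (TT g h)"
    using a by (intro mulG) simp_all
  also have "\<dots> = lamG g h \<otimes> (W \<otimes> (\<beta> g h \<otimes> \<alpha> (inv h) g)) \<otimes> (inv (\<alpha> h h) \<otimes> \<alpha> h g \<otimes> \<alpha> h h)"
    unfolding 1 2 ..
  also have "\<dots> =
     cj G (dd g) h \<otimes> inv (\<beta> g h) \<otimes> \<alpha> g h \<otimes> (W \<otimes> (\<beta> g h \<otimes> inv (\<alpha> h g))) \<otimes> (inv (\<alpha> h h) \<otimes> \<alpha> h g \<otimes> \<alpha> h h)"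
    using a by (simp add: lamG_def bl_inv1 chA BL)
  also have "\<dots> = \<alpha> g h \<otimes> (g \<otimes> cj G (\<psi>u g) h)"
    using a W unfolding W_def
    by (simp add: m_assoc cj_inv chA BL,
        simp add: pull[of "inv (\<beta> g h)"] chA BL, simp add: pull[of "\<beta> g h"] chA BL,
        simp add: pull[of "inv (\<alpha> h g)"] chA BL, simp add: pull[of "\<alpha> h g"] chA BL,
        simp add: pull[of "inv (\<alpha> h h)"] chA BL, simp add: pull[of "\<alpha> h h"] chA BL,
        simp add: pull[of "\<alpha> g h"] chA BL)
  also have "\<dots> = addG g (lamG g h)"
    using a by (simp add: mulG m_assoc pull[of "\<alpha> g h"] chA BL)
  finally show ?thesis .
qed


lemma FF_form: "g \<in> carrier G \<Longrightarrow> h \<in> carrier G \<Longrightarrow>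
  FF g h = g \<otimes> cj G (\<psi>u g) h \<otimes> cj G (\<phi>u h) (inv g) \<otimes> (\<beta> h (inv g) \<otimes> \<alpha> g h)"
proof -
  assume a: "g \<in> carrier G" "h \<in> carrier G"
  have c: "\<psi>u g \<in> carrier G" "\<phi>u h \<in> carrier G" "\<beta> h (inv g) \<in> carrier G"
    "\<alpha> g h \<in> carrier G" using a by (simp_all add: chP BL)
  show ?thesis
    unfolding FF_def ybe_r'_def Let_def cj_def split fst_conv
    using a c by (simp only: m_assoc m_closed inv_closed inv_inv)
qed

lemma TT'_form0: "g \<in> carrier G \<Longrightarrow> h \<in> carrier G \<Longrightarrow>
  TT' g h = cj G (\<phi>u h \<otimes> inv (\<psi>u h)) g \<otimes> (\<beta> h g \<otimes> \<alpha> (inv h) g)"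
proof -
  assume a: "g \<in> carrier G" "h \<in> carrier G"
  have c: "\<psi>u h \<in> carrier G" "\<phi>u h \<in> carrier G" "\<beta> h g \<in> carrier G"
    "\<alpha> (inv h) g \<in> carrier G" using a by (simp_all add: chP BL)
  show ?thesis
    unfolding TT'_def ybe_r'_def Let_def cj_def split snd_conv
    using a c by (simp only: m_assoc m_closed inv_closed inv_inv)
qed

lemma TT'_form: "g \<in> carrier G \<Longrightarrow> h \<in> carrier G \<Longrightarrow>
  TT' g h = cj G (\<phi>u h) (cj G (\<psi>u (inv h)) g) \<otimes> (\<beta> h g \<otimes> \<alpha> (inv h) g)"
  by (simp add: TT'_form0 cj_cj[symmetric] ch_inv[OF cjhom_psi] chP)

lemma FF_closed[simp]: "g \<in> carrier G \<Longrightarrow> h \<in> carrier G \<Longrightarrow> FF g h \<in> carrier G"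
  by (simp add: FF_form chA BL)
lemma TT'_closed[simp]: "g \<in> carrier G \<Longrightarrow> h \<in> carrier G \<Longrightarrow> TT' g h \<in> carrier G"
  by (simp add: TT'_form chA BL)

lemma FF_eq: "g \<in> carrier G \<Longrightarrow> h \<in> carrier G \<Longrightarrow> FF g h = addG (addG g (lamG g h)) (negG g)"
proof -
  assume a: "g \<in> carrier G" "h \<in> carrier G"
  define Xg where "Xg = g \<otimes> cj G (\<psi>u g) h \<otimes> \<alpha> g h"
  have Xg: "addG g (lamG g h) = Xg" using a by (simp add: mulG Xg_def)
  have Xgc: "Xg \<in> carrier G" using a by (simp add: Xg_def chA BL)
  have p: "cj G (\<phi>u Xg) (negG g) = cj G (\<phi>u h) (inv g) \<otimes> \<beta> g g"
    using a by (simp add: Xg_def negG_def ch_mult cj_mult ch_comm[of \<phi>u \<phi>u g h] chP BL)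
  have q: "\<beta> Xg (negG g) = inv (\<beta> g g) \<otimes> inv (\<beta> h g)"
    using a by (simp add: Xg_def negG_def bl_m1 bl_m2 bl_inv2 chP BL)
  have "addG (addG g (lamG g h)) (negG g) = Xg \<otimes> (cj G (\<phi>u h) (inv g) \<otimes> \<beta> g g) \<otimes> (inv (\<beta> g g) \<otimes> inv (\<beta> h g))"
    unfolding Xg addG_def[of Xg] p q ..
  also have "\<dots> = FF g h"
    using a unfolding Xg_def
    by (simp add: FF_form bl_inv2 m_assoc chA BL,
        simp add: pull[of "inv (\<beta> g g)"] chA BL, simp add: pull[of "\<beta> g g"] chA BL,
        simp add: pull[of "inv (\<beta> h g)"] chA BL, simp add: pull[of "\<alpha> g h"] chA BL)
  finally show ?thesis by simp
qed

lemma TT'_eq: "g \<in> carrier G \<Longrightarrow> h \<in> carrier G \<Longrightarrow> addG (FF g h) (lamG (FF g h) (TT' g h)) = addG g (lamG g h)"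
proof -
  assume a: "g \<in> carrier G" "h \<in> carrier G"
  have 0: "addG (FF g h) (lamG (FF g h) (TT' g h)) =
     FF g h \<otimes> cj G (\<psi>u (FF g h)) (TT' g h) \<otimes> \<alpha> (FF g h) (TT' g h)"
    using a by (intro mulG) simp_all
  have psF: "cj G (\<psi>u (FF g h)) y = cj G (\<psi>u h) y" if y: "y \<in> carrier G" for y
    using a y by (simp add: FF_form ch_mult ch_comm[of \<psi>u \<psi>u g h] chA BL)
  have 1: "cj G (\<psi>u (FF g h)) (TT' g h) = cj G (\<phi>u h) g \<otimes> (\<beta> h g \<otimes> inv (\<alpha> h g))"
    using a by (simp add: psF TT'_form cj_mult ch_comm[of \<psi>u \<phi>u h h] bl_inv1 chA BL)
  have 2: "\<alpha> (FF g h) (TT' g h) = \<alpha> g g \<otimes> \<alpha> h g \<otimes> inv (\<alpha> g g)"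
  proof -
    have "\<alpha> (FF g h) (TT' g h) = \<alpha> (FF g h) g" using a by (simp add: TT'_form bl_m2 chA BL)
    also have "\<dots> = \<alpha> g g \<otimes> \<alpha> h g \<otimes> inv (\<alpha> g g)" using a by (simp add: FF_form bl_m1 bl_inv1 chA BL)
    finally show ?thesis .
  qed
  have "addG (FF g h) (lamG (FF g h) (TT' g h)) =
    (g \<otimes> cj G (\<psi>u g) h \<otimes> cj G (\<phi>u h) (inv g) \<otimes> (\<beta> h (inv g) \<otimes> \<alpha> g h)) \<otimes>
      (cj G (\<phi>u h) g \<otimes> (\<beta> h g \<otimes> inv (\<alpha> h g))) \<otimes> (\<alpha> g g \<otimes> \<alpha> h g \<otimes> inv (\<alpha> g g))"
    unfolding 0 1 2 using a by (simp add: FF_form)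
  also have "\<dots> = \<alpha> g h \<otimes> (g \<otimes> cj G (\<psi>u g) h)"
    using a
    by (simp add: m_assoc cj_inv bl_inv2 chA BL,
        simp add: pull[of "inv (\<beta> h g)"] chA BL, simp add: pull[of "\<beta> h g"] chA BL,
        simp add: pull[of "inv (\<alpha> h g)"] chA BL, simp add: pull[of "\<alpha> h g"] chA BL,
        simp add: pull[of "inv (\<alpha> g g)"] chA BL, simp add: pull[of "\<alpha> g g"] chA BL,
        simp add: pull[of "\<alpha> g h"] chA BL)
  also have "\<dots> = addG g (lamG g h)"
    using a by (simp add: mulG m_assoc pull[of "\<alpha> g h"] chA BL)
  finally show ?thesis .
qed

lemma lbrace_inst: "lbrace (carrier G) addG \<one> negG lamG ilamG"
proof
  fix a b c x y
  show "a \<in> carrier G \<Longrightarrow> b \<in> carrier G \<Longrightarrow> addG a b \<in> carrier G" by simp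
  show "\<one> \<in> carrier G" by simp
  show "a \<in> carrier G \<Longrightarrow> negG a \<in> carrier G" by simp
  show "a \<in> carrier G \<Longrightarrow> b \<in> carrier G \<Longrightarrow> c \<in> carrier G \<Longrightarrow> addG (addG a b) c = addG a (addG b c)"
    by (rule addG_assoc)
  show "a \<in> carrier G \<Longrightarrow> addG \<one> a = a" by (rule addG_e_left)
  show "a \<in> carrier G \<Longrightarrow> addG a \<one> = a" by (rule addG_e_right)
  show "a \<in> carrier G \<Longrightarrow> addG (negG a) a = \<one>" by (rule negG_left)
  show "a \<in> carrier G \<Longrightarrow> addG a (negG a) = \<one>" by (rule negG_right)
  show "a \<in> carrier G \<Longrightarrow> b \<in> carrier G \<Longrightarrow> lamG a b \<in> carrier G" by simp
  show "a \<in> carrier G \<Longrightarrow> x \<in> carrier G \<Longrightarrow> y \<in> carrier G \<Longrightarrow> lamG a (addG x y) = addG (lamG a x) (lamG a y)"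
    by (rule lamG_add)
  show "a \<in> carrier G \<Longrightarrow> b \<in> carrier G \<Longrightarrow> ilamG a b \<in> carrier G" by (simp add: ilamG_def)
  show "a \<in> carrier G \<Longrightarrow> x \<in> carrier G \<Longrightarrow> lamG a (ilamG a x) = x" by (rule lamG_ilam)
  show "a \<in> carrier G \<Longrightarrow> x \<in> carrier G \<Longrightarrow> ilamG a (lamG a x) = x" by (rule ilamG_lam)
  show "a \<in> carrier G \<Longrightarrow> b \<in> carrier G \<Longrightarrow> c \<in> carrier G \<Longrightarrow> lamG (addG a (lamG a b)) c = lamG a (lamG b c)"
    by (rule lamG_mul0)
  show "x \<in> carrier G \<Longrightarrow> lamG \<one> x = x" by simp
qed

lemma r_sol: "ybe_solution (carrier G) (ybe_r G \<psi>u \<phi>u \<alpha> \<beta>) \<and> nondegenerate (carrier G) (ybe_r G \<psi>u \<phi>u \<alpha> \<beta>)"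
proof (rule lbrace.solution[OF lbrace_inst])
  fix a b assume ab: "a \<in> carrier G" "b \<in> carrier G"
  show "fst (ybe_r G \<psi>u \<phi>u \<alpha> \<beta> (a, b)) = lamG a b" by (rule r_fst)
  show "snd (ybe_r G \<psi>u \<phi>u \<alpha> \<beta> (a, b)) \<in> carrier G" using ab TT_closed by (simp add: TT_def)
  show "lbrace.mul addG lamG (fst (ybe_r G \<psi>u \<phi>u \<alpha> \<beta> (a, b))) (snd (ybe_r G \<psi>u \<phi>u \<alpha> \<beta> (a, b))) =
        lbrace.mul addG lamG a b"
    unfolding lbrace.mul_def[OF lbrace_inst] r_fst TT_def[symmetric] using ab by (rule TT_eq)
qed

lemma r'_sol: "ybe_solution (carrier G) (ybe_r' G \<psi>u \<phi>u \<alpha> \<beta>) \<and> nondegenerate (carrier G) (ybe_r' G \<psi>u \<phi>u \<alpha> \<beta>)"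
proof (rule lbrace.solution_op[OF lbrace_inst])
  fix a b assume ab: "a \<in> carrier G" "b \<in> carrier G"
  show "fst (ybe_r' G \<psi>u \<phi>u \<alpha> \<beta> (a, b)) = addG (lbrace.mul addG lamG a b) (negG a)"
    unfolding lbrace.mul_def[OF lbrace_inst] FF_def[symmetric] using ab by (rule FF_eq)
  show "snd (ybe_r' G \<psi>u \<phi>u \<alpha> \<beta> (a, b)) \<in> carrier G" using ab TT'_closed by (simp add: TT'_def)
  show "lbrace.mul addG lamG (fst (ybe_r' G \<psi>u \<phi>u \<alpha> \<beta> (a, b))) (snd (ybe_r' G \<psi>u \<phi>u \<alpha> \<beta> (a, b))) =
        lbrace.mul addG lamG a b"
    unfolding lbrace.mul_def[OF lbrace_inst] FF_def[symmetric] TT'_def[symmetric] using ab by (rule TT'_eq)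
qed

end

theorem mainTheorem14:
  fixes G :: "('a, 'b) monoid_scheme" and K A :: "'a set"
    and \<psi> \<phi> :: "'a set \<Rightarrow> 'a set" and \<psi>u \<phi>u :: "'a \<Rightarrow> 'a"
    and \<alpha> \<beta> :: "'a \<Rightarrow> 'a \<Rightarrow> 'a"
  assumes "group G"
    and "central_subgroup G K"
    and "subgroup A G" and "K \<subseteq> A"
    and "\<forall>a \<in> A. \<forall>b \<in> A. (K #>\<^bsub>G\<^esub> a) \<otimes>\<^bsub>G Mod K\<^esub> (K #>\<^bsub>G\<^esub> b)
                         = (K #>\<^bsub>G\<^esub> b) \<otimes>\<^bsub>G Mod K\<^esub> (K #>\<^bsub>G\<^esub> a)"
    and "\<psi> \<in> endA G K A" and "\<phi> \<in> endA G K A"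
    and "\<alpha> \<in> bilinB G K" and "\<beta> \<in> bilinB G K"
    and "lifting G K A \<psi> \<psi>u" and "lifting G K A \<phi> \<phi>u"
  shows "ybe_solution (carrier G) (ybe_r G \<psi>u \<phi>u \<alpha> \<beta>)
         \<and> nondegenerate (carrier G) (ybe_r G \<psi>u \<phi>u \<alpha> \<beta>)
         \<and> ybe_solution (carrier G) (ybe_r' G \<psi>u \<phi>u \<alpha> \<beta>)
         \<and> nondegenerate (carrier G) (ybe_r' G \<psi>u \<phi>u \<alpha> \<beta>)"
proof -
  interpret C: cset G K A \<psi> \<phi> \<psi>u \<phi>u \<alpha> \<beta>
    by (rule cset.intro, rule assms(1), rule cset_axioms.intro) (rule assms)+
  show ?thesis using C.r_sol C.r'_sol by blast
qed

end
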